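(* Let $(X,d)$ be a complete metric space and $(\mathbb{H}(X),h)$ the space of nonempty compact subsets of $X$ with the Hausdorff metric. For each $i\in\mathbb{N}$ let $\mathcal{F}_i=\{X; f_{1,i},\dots,f_{n,i}\}$ be a family of $n$ Lipschitz maps $f_{r,i}:X\to X$, with set map $\mathcal{F}_i(A)=\bigcup_{r=1}^n f_{r,i}(A)$, and suppose $\lim_{k\to\infty}\prod_{i=1}^k L_{\mathcal{F}_i}=0$ where $L_{\mathcal{F}_i}=\max_r\mathrm{Lip}(f_{r,i})$. Let $\mathcal{F}=\{X; f_1,\dots,f_n\}$ with set map $\mathcal{F}(A)=\bigcup_{r=1}^n f_r(A)$. Assume there exists a compact set $C\subseteq X$ with $f_{r,i}(C)\subseteq C$ for all $r,i$, that for each $r$ the sequence $f_{r,i}$ converges uniformly on $C$ to $f_r$ as $i\to\infty$, and that $L_{\mathcal{F}}=\max_r\mathrm{Lip}(f_r)<1$. Then for every nonempty compact $A\subseteq C$, the forward trajectory $\mathcal{F}_k\circ\mathcal{F}_{k-1}\circ\cdots\circ\mathcal{F}_1(A)$ converges in $(\mathbb{H}(X),h)$ to the unique attractor of $\mathcal{F}$, i.e., the unique $A_{\mathcal{F}}\in\mathbb{H}(X)$ with $\mathcal{F}(A_{\mathcal{F}})=A_{\mathcal{F}}$.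
   Context: The Hausdorff metric is $h(B,C)=\max\{d(B,C),d(C,B)\}$ with $d(B,C)=\sup_{b\in B}\inf_{c\in C}d(b,c)$. *)

theory Defs
  imports "HOL-Analysis.Analysis"
begin

text \<open>Directed Hausdorff distance d(B,C) = sup over b in B of inf over c in C of dist b c,
  and the Hausdorff metric h(B,C) = max (d(B,C)) (d(C,B)).  Intended for nonempty compact sets.\<close>
definition hdist_dir :: "'a::metric_space set \<Rightarrow> 'a set \<Rightarrow> real" where
  "hdist_dir B C = (SUP b\<in>B. INF c\<in>C. dist b c)"

definition hausdorff_metric :: "'a::metric_space set \<Rightarrow> 'a set \<Rightarrow> real" where
  "hausdorff_metric B C = max (hdist_dir B C) (hdist_dir C B)"

definition Lip :: "('a::metric_space \<Rightarrow> 'b::metric_space) \<Rightarrow> real" where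
  "Lip f = Inf {L. L-lipschitz_on UNIV f}"

definition set_map :: "nat \<Rightarrow> (nat \<Rightarrow> 'a \<Rightarrow> 'a) \<Rightarrow> 'a set \<Rightarrow> 'a set" where
  "set_map n f A = (\<Union>r<n. f r ` A)"

text \<open>Forward trajectory F_k o ... o F_1 (A); the families are indexed by i = 1, 2, ...;
  fs r i is the r-th map of the i-th family.\<close>
primrec forward_traj :: "nat \<Rightarrow> (nat \<Rightarrow> nat \<Rightarrow> 'a \<Rightarrow> 'a) \<Rightarrow> nat \<Rightarrow> 'a set \<Rightarrow> 'a set" where
  "forward_traj n fs 0 A = A"
| "forward_traj n fs (Suc k) A = set_map n (\<lambda>r. fs r (Suc k)) (forward_traj n fs k A)"

end

theory Submission imports Defs begin

lemma Lip_works: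
  fixes g :: "'a::metric_space \<Rightarrow> 'b::metric_space"
  assumes "\<exists>L. L-lipschitz_on UNIV g"
  shows "(Lip g)-lipschitz_on UNIV g"
proof -
  obtain L0 where L0: "L0-lipschitz_on UNIV g" using assms by blast
  let ?S = "{L. L-lipschitz_on UNIV g}"
  have ne: "?S \<noteq> {}" using L0 by blast
  have nn: "0 \<le> Lip g" unfolding Lip_def
    by (rule cInf_greatest[OF ne]) (auto simp: lipschitz_on_nonneg)
  show ?thesis
  proof (rule lipschitz_onI[OF _ nn])
    fix x y :: 'a
    show "dist (g x) (g y) \<le> Lip g * dist x y"
    proof (cases "x = y")
      case True then show ?thesis by simp
    next
      case False
      then have d: "dist x y > 0" by simp
      have "dist (g x) (g y) / dist x y \<le> Lip g" unfolding Lip_def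
      proof (rule cInf_greatest[OF ne])
        fix L assume "L \<in> ?S"
        then have "dist (g x) (g y) \<le> L * dist x y" by (auto dest: lipschitz_onD)
        then show "dist (g x) (g y) / dist x y \<le> L" using d by (simp add: divide_le_eq)
      qed
      then show ?thesis using d by (simp add: divide_le_eq)
    qed
  qed
qed

lemma infdist_attained:
  fixes B :: "'a::metric_space set"
  assumes "compact B" "B \<noteq> {}"
  obtains b where "b \<in> B" "infdist x B = dist x b"
proof -
  obtain b where b: "b \<in> B" "\<forall>y\<in>B. dist x b \<le> dist x y"
    using continuous_attains_inf[OF assms, of "dist x"] continuous_on_dist[OF continuous_on_const continuous_on_id, of B x] by auto
  have "infdist x B = dist x b"
  proof (rule antisym)
    show "infdist x B \<le> dist x b" using b infdist_le by blast
    show "dist x b \<le> infdist x B" unfolding infdist_def using assms(2) b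
      by (auto intro: cINF_greatest)
  qed
  then show ?thesis using that b by blast
qed

lemma hdir_eq: "B \<noteq> {} \<Longrightarrow> hdist_dir A B = (SUP a\<in>A. infdist a B)"
  by (simp add: hdist_dir_def infdist_def)

lemma bdd_infdist:
  fixes A :: "'a::metric_space set"
  assumes "compact A"
  shows "bdd_above ((\<lambda>a. infdist a B) ` A)"
proof -
  have "compact ((\<lambda>a. infdist a B) ` A)"
    by (rule compact_continuous_image[OF _ assms]) (auto intro: continuous_intros)
  then show ?thesis by (simp add: bounded_imp_bdd_above compact_imp_bounded)
qed

lemma hm_le_iff:
  fixes A B :: "'a::metric_space set"
  assumes "compact A" "compact B" "A \<noteq> {}" "B \<noteq> {}"
  shows "hausdorff_metric A B \<le> e \<longleftrightarrow> (\<forall>a\<in>A. infdist a B \<le> e) \<and> (\<forall>b\<in>B. infdist b A \<le> e)"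
  using assms bdd_infdist[OF assms(1), of B] bdd_infdist[OF assms(2), of A]
  by (simp add: hausdorff_metric_def hdir_eq cSUP_le_iff)

lemma hm_upper:
  fixes A B :: "'a::metric_space set"
  assumes "compact A" "compact B" "A \<noteq> {}" "B \<noteq> {}"
  shows "\<forall>a\<in>A. infdist a B \<le> hausdorff_metric A B" "\<forall>b\<in>B. infdist b A \<le> hausdorff_metric A B"
  using hm_le_iff[OF assms, of "hausdorff_metric A B"] by auto

lemma hm_point:
  fixes A B :: "'a::metric_space set"
  assumes "compact A" "compact B" "A \<noteq> {}" "B \<noteq> {}" "a \<in> A"
  shows "\<exists>b\<in>B. dist a b \<le> hausdorff_metric A B"
  by (metis assms hm_upper(1) infdist_attained)

lemma hm_point2:
  fixes A B :: "'a::metric_space set"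
  assumes "compact A" "compact B" "A \<noteq> {}" "B \<noteq> {}" "b \<in> B"
  shows "\<exists>a\<in>A. dist b a \<le> hausdorff_metric A B"
  by (metis assms hm_upper(2) infdist_attained)

lemma hm_nonneg:
  fixes A B :: "'a::metric_space set"
  assumes "compact A" "compact B" "A \<noteq> {}" "B \<noteq> {}"
  shows "0 \<le> hausdorff_metric A B"
  using hm_upper(1)[OF assms] assms(3) infdist_nonneg by (meson ex_in_conv order_trans)

lemma hm_triangle:
  fixes A B D :: "'a::metric_space set"
  assumes "compact A" "compact B" "A \<noteq> {}" "B \<noteq> {}" "compact D" "D \<noteq> {}"
  shows "hausdorff_metric A D \<le> hausdorff_metric A B + hausdorff_metric B D"
proof (subst hm_le_iff[OF assms(1,5,3,6)], intro conjI ballI)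
  fix a assume a: "a \<in> A"
  obtain b where b: "b \<in> B" "dist a b \<le> hausdorff_metric A B" using hm_point[OF assms(1-4) a] by blast
  obtain d where d: "d \<in> D" "dist b d \<le> hausdorff_metric B D" using hm_point[OF assms(2,5,4,6) b(1)] by blast
  have "infdist a D \<le> dist a d" using d infdist_le by blast
  also have "\<dots> \<le> dist a b + dist b d" by (rule dist_triangle)
  finally show "infdist a D \<le> hausdorff_metric A B + hausdorff_metric B D" using b d by linarith
next
  fix d assume d: "d \<in> D"
  obtain b where b: "b \<in> B" "dist d b \<le> hausdorff_metric B D" using hm_point2[OF assms(2,5,4,6) d] by blast
  obtain a where a: "a \<in> A" "dist b a \<le> hausdorff_metric A B" using hm_point2[OF assms(1-4) b(1)] by blast
  have "infdist d A \<le> dist d a" using a infdist_le by blast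
  also have "\<dots> \<le> dist d b + dist b a" by (rule dist_triangle)
  finally show "infdist d A \<le> hausdorff_metric A B + hausdorff_metric B D" using a b by linarith
qed

lemma hm_zero:
  fixes A B :: "'a::metric_space set"
  assumes "compact A" "compact B" "A \<noteq> {}" "B \<noteq> {}" "hausdorff_metric A B \<le> 0"
  shows "A = B"
proof -
  have 1: "\<forall>a\<in>A. infdist a B = 0" "\<forall>b\<in>B. infdist b A = 0"
    using hm_le_iff[OF assms(1-4), of 0] assms(5) infdist_nonneg by (meson antisym)+
  have "A \<subseteq> closure B" "B \<subseteq> closure A"
    using 1 in_closure_iff_infdist_zero assms(3,4) by blast+
  then show ?thesis using assms(1,2) by (simp add: compact_imp_closed closure_closed)
qed

lemma hm_sym: "hausdorff_metric A B = hausdorff_metric B A"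
  by (simp add: hausdorff_metric_def max.commute)

lemma sm_compact:
  assumes "compact A" "\<And>r. r < n \<Longrightarrow> continuous_on UNIV (g r)"
  shows "compact (set_map n g A)"
  unfolding set_map_def
  by (intro compact_UN finite_lessThan compact_continuous_image[OF _ assms(1)])
     (auto intro: continuous_on_subset[OF assms(2)])

lemma sm_ne: "A \<noteq> {} \<Longrightarrow> 1 \<le> n \<Longrightarrow> set_map n g A \<noteq> {}"
  unfolding set_map_def by fastforce

lemma sm_mono: "A \<subseteq> B \<Longrightarrow> set_map n g A \<subseteq> set_map n g B"
  unfolding set_map_def by blast

lemma sm_lip:
  fixes A B :: "'a::metric_space set"
  assumes "compact A" "compact B" "A \<noteq> {}" "B \<noteq> {}" "1 \<le> n"
    and cont: "\<And>r. r < n \<Longrightarrow> continuous_on UNIV (g r)"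
    and lip: "\<And>r x y. r < n \<Longrightarrow> dist (g r x) (g r y) \<le> L * dist x y"
    and L: "0 \<le> L"
  shows "hausdorff_metric (set_map n g A) (set_map n g B) \<le> L * hausdorff_metric A B"
proof -
  have c1: "compact (set_map n g A)" "compact (set_map n g B)" using sm_compact[of A n g] sm_compact[of B n g] cont assms(1,2) by auto
  have c2: "set_map n g A \<noteq> {}" "set_map n g B \<noteq> {}" using sm_ne[of A n g] sm_ne[of B n g] assms(3,4,5) by auto
  show ?thesis
proof (rule hm_le_iff[THEN iffD2, OF c1 c2], intro conjI ballI)
  fix y assume "y \<in> set_map n g A"
  then obtain r a where ra: "r < n" "a \<in> A" "y = g r a" unfolding set_map_def by blast
  obtain b where b: "b \<in> B" "dist a b \<le> hausdorff_metric A B" using hm_point[OF assms(1-4) ra(2)] by blast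
  have "g r b \<in> set_map n g B" using ra b unfolding set_map_def by blast
  then have "infdist y (set_map n g B) \<le> dist (g r a) (g r b)" using ra infdist_le by blast
  also have "\<dots> \<le> L * dist a b" using lip ra by blast
  also have "\<dots> \<le> L * hausdorff_metric A B" using b L by (simp add: mult_left_mono)
  finally show "infdist y (set_map n g B) \<le> L * hausdorff_metric A B" .
next
  fix y assume "y \<in> set_map n g B"
  then obtain r a where ra: "r < n" "a \<in> B" "y = g r a" unfolding set_map_def by blast
  obtain b where b: "b \<in> A" "dist a b \<le> hausdorff_metric A B" using hm_point2[OF assms(1-4) ra(2)] by blast
  have "g r b \<in> set_map n g A" using ra b unfolding set_map_def by blast
  then have "infdist y (set_map n g A) \<le> dist (g r a) (g r b)" using ra infdist_le by blast
  also have "\<dots> \<le> L * dist a b" using lip ra by blast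
  also have "\<dots> \<le> L * hausdorff_metric A B" using b L by (simp add: mult_left_mono)
  finally show "infdist y (set_map n g A) \<le> L * hausdorff_metric A B" .
qed
qed

lemma sm_pert:
  fixes A C :: "'a::metric_space set"
  assumes "compact A" "A \<noteq> {}" "1 \<le> n" "A \<subseteq> C"
    and contg: "\<And>r. r < n \<Longrightarrow> continuous_on UNIV (g r)"
    and conth: "\<And>r. r < n \<Longrightarrow> continuous_on UNIV (h r)"
    and close: "\<And>r x. r < n \<Longrightarrow> x \<in> C \<Longrightarrow> dist (g r x) (h r x) \<le> \<delta>"
  shows "hausdorff_metric (set_map n g A) (set_map n h A) \<le> \<delta>"
proof -
  have c1: "compact (set_map n g A)" "compact (set_map n h A)" using sm_compact[of A n g] sm_compact[of A n h] contg conth assms(1) by auto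
  have c2: "set_map n g A \<noteq> {}" "set_map n h A \<noteq> {}" using sm_ne[of A n g] sm_ne[of A n h] assms(2,3) by auto
  show ?thesis
proof (rule hm_le_iff[THEN iffD2, OF c1 c2], intro conjI ballI)
  fix y assume "y \<in> set_map n g A"
  then obtain r a where ra: "r < n" "a \<in> A" "y = g r a" unfolding set_map_def by blast
  have "h r a \<in> set_map n h A" using ra unfolding set_map_def by blast
  then have "infdist y (set_map n h A) \<le> dist (g r a) (h r a)" using ra infdist_le by blast
  also have "\<dots> \<le> \<delta>" using close ra assms(4) by blast
  finally show "infdist y (set_map n h A) \<le> \<delta>" .
next
  fix y assume "y \<in> set_map n h A"
  then obtain r a where ra: "r < n" "a \<in> A" "y = h r a" unfolding set_map_def by blast
  have "g r a \<in> set_map n g A" using ra unfolding set_map_def by blast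
  then have "infdist y (set_map n g A) \<le> dist (h r a) (g r a)" using ra infdist_le by blast
  also have "\<dots> \<le> \<delta>" using close[of r a] ra assms(4) by (auto simp: dist_commute)
  finally show "infdist y (set_map n g A) \<le> \<delta>" .
qed
qed

lemma nest_ne:
  fixes T :: "nat \<Rightarrow> 'a::metric_space set"
  assumes "\<And>k. compact (T k)" "\<And>k. T k \<noteq> {}" "\<And>k. T (Suc k) \<subseteq> T k"
  shows "\<Inter>(range T) \<noteq> {}"
proof -
  have dec: "decseq T" by (rule decseq_SucI) (use assms(3) in auto)
  have "T 0 \<inter> \<Inter>(range T) \<noteq> {}"
  proof (rule compact_imp_fip[OF assms(1)])
    fix S assume "S \<in> range T" then show "closed S" using assms(1) compact_imp_closed by blast
  next
    fix F' assume F': "finite F'" "F' \<subseteq> range T"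
    then obtain I where I: "finite I" "F' = T ` I" by (meson finite_subset_image)
    define m where "m = Max (insert 0 I)"
    have "\<forall>i\<in>insert 0 I. T m \<subseteq> T i"
      using I dec unfolding m_def by (auto intro!: decseqD[OF dec])
    then have "T m \<subseteq> T 0 \<inter> \<Inter>F'" using I by auto
    then show "T 0 \<inter> \<Inter>F' \<noteq> {}" using assms(2) by blast
  qed
  then show ?thesis by blast
qed

lemma rec_to_zero:
  fixes a :: "nat \<Rightarrow> real"
  assumes nn: "\<And>k. 0 \<le> a k" and L: "0 \<le> L" "L < 1"
    and step: "\<And>\<delta>. \<delta> > 0 \<Longrightarrow> \<exists>N. \<forall>k\<ge>N. a (Suc k) \<le> \<delta> + L * a k"
  shows "a \<longlonglongrightarrow> 0"
proof (rule LIMSEQ_I)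
  fix e :: real assume e: "0 < e"
  define \<delta> where "\<delta> = e * (1 - L) / 4"
  have dpos: "\<delta> > 0" using e L by (simp add: \<delta>_def)
  obtain N where N: "\<forall>k\<ge>N. a (Suc k) \<le> \<delta> + L * a k" using step[OF dpos] by blast
  have bound: "a (N + j) \<le> \<delta> / (1 - L) + L ^ j * a N" for j
  proof (induction j)
    case 0 then show ?case using dpos L by simp
  next
    case (Suc j)
    have "a (N + Suc j) \<le> \<delta> + L * a (N + j)" using N by simp
    also have "\<dots> \<le> \<delta> + L * (\<delta> / (1 - L) + L ^ j * a N)"
      using Suc L by (simp add: mult_left_mono)
    also have "\<dots> = \<delta> / (1 - L) + L ^ Suc j * a N"
      using L by (simp add: field_simps)
    finally show ?case .
  qed
  have "(\<lambda>j. L ^ j * a N) \<longlonglongrightarrow> 0"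
    by (intro tendsto_mult_left_zero LIMSEQ_power_zero) (use L in simp)
  moreover have "(0::real) < e / 4" using e by simp
  ultimately have "\<forall>\<^sub>F j in sequentially. L ^ j * a N < e / 4" by (rule order_tendstoD(2))
  then obtain J where J: "\<forall>j\<ge>J. L ^ j * a N < e / 4"
    unfolding eventually_sequentially by blast
  have "1 - L \<noteq> 0" using L by simp
  then have dd: "\<delta> / (1 - L) = e / 4" unfolding \<delta>_def by (simp add: field_simps)
  show "\<exists>no. \<forall>k\<ge>no. norm (a k - 0) < e"
  proof (intro exI allI impI)
    fix k assume "N + J \<le> k"
    define j where "j = k - N"
    have j: "k = N + j" "J \<le> j" using \<open>N + J \<le> k\<close> unfolding j_def by auto
    have "L ^ j * a N < e / 4" using J j(2) by blast
    then have "a k < e / 4 + e / 4" using bound[of j] j(1) dd by simp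
    then show "norm (a k - 0) < e" using nn[of k] e by simp
  qed
qed

lemma attractor_from_invariant:
  fixes f :: "nat \<Rightarrow> 'a::metric_space \<Rightarrow> 'a"
  assumes D: "compact D" "D \<noteq> {}" "set_map n f D \<subseteq> D" and n: "1 \<le> n"
    and cont: "\<And>r. r < n \<Longrightarrow> continuous_on UNIV (f r)"
  shows "\<exists>K. compact K \<and> K \<noteq> {} \<and> set_map n f K = K"
proof -
  define Dk where "Dk k = (set_map n f ^^ k) D" for k
  have Dk_suc: "Dk (Suc k) = set_map n f (Dk k)" for k by (simp add: Dk_def)
  have Dk0: "Dk 0 = D" by (simp add: Dk_def)
  have comp: "compact (Dk k) \<and> Dk k \<noteq> {}" for k
  proof (induction k)
    case 0 then show ?case using D by (simp add: Dk0)
  next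
    case (Suc k) then show ?case using sm_compact[of "Dk k" n f] sm_ne[of "Dk k" n f] cont n by (simp add: Dk_suc)
  qed
  have dec1: "Dk (Suc k) \<subseteq> Dk k" for k
  proof (induction k)
    case 0 then show ?case using D by (simp add: Dk_suc Dk0)
  next
    case (Suc k) then show ?case by (simp add: Dk_suc sm_mono)
  qed
  have dec: "decseq Dk" by (rule decseq_SucI) (use dec1 in auto)
  define K where "K = \<Inter>(range Dk)"
  have Kne: "K \<noteq> {}" unfolding K_def using nest_ne[of Dk] comp dec1 by blast
  have Kcl: "closed K" unfolding K_def using comp compact_imp_closed by blast
  have "compact (Dk 0 \<inter> K)" using comp Kcl by blast
  moreover have "Dk 0 \<inter> K = K" unfolding K_def by blast
  ultimately have Kc: "compact K" by simp
  have sub: "set_map n f K \<subseteq> K"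
  proof -
    have "set_map n f K \<subseteq> Dk k" for k
    proof -
      have "set_map n f K \<subseteq> set_map n f (Dk k)" by (rule sm_mono) (auto simp: K_def)
      then show ?thesis using dec1[of k] by (simp add: Dk_suc)
    qed
    then show ?thesis unfolding K_def by blast
  qed
  have sup: "K \<subseteq> set_map n f K"
  proof
    fix y assume y: "y \<in> K"
    define T where "T r k = Dk k \<inter> f r -` {y}" for r k
    have "\<exists>r<n. \<forall>k. T r k \<noteq> {}"
    proof (rule ccontr)
      assume "\<not> (\<exists>r<n. \<forall>k. T r k \<noteq> {})"
      then have "\<forall>r\<in>{..<n}. \<exists>k. T r k = {}" by blast
      then obtain kk where kk: "\<forall>r\<in>{..<n}. T r (kk r) = {}" by (metis bchoice)
      define k0 where "k0 = Max (kk ` {..<n})"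
      have "y \<in> Dk (Suc k0)" using y unfolding K_def by blast
      then obtain r x where rx: "r < n" "x \<in> Dk k0" "y = f r x"
        unfolding Dk_suc set_map_def by blast
      have "kk r \<le> k0" unfolding k0_def using rx(1) by (simp add: Max_ge)
      then have "x \<in> Dk (kk r)" using decseqD[OF dec] rx(2) by blast
      then have "x \<in> T r (kk r)" using rx unfolding T_def by simp
      then show False using kk rx(1) by auto
    qed
    then obtain r where r: "r < n" "\<And>k. T r k \<noteq> {}" by blast
    have "compact (T r k)" for k
      unfolding T_def using comp[of k] closed_vimage[OF closed_singleton cont[OF r(1)]] by blast
    moreover have "T r (Suc k) \<subseteq> T r k" for k unfolding T_def using dec1 by blast
    ultimately have "\<Inter>(range (T r)) \<noteq> {}" using nest_ne[of "T r"] r(2) by blast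
    then obtain x where "x \<in> \<Inter>(range (T r))" by blast
    then have "x \<in> K" "f r x = y" unfolding T_def K_def by auto
    then show "y \<in> set_map n f K" using r(1) unfolding set_map_def by blast
  qed
  show ?thesis using Kc Kne sub sup by blast
qed

lemma attractor_unique:
  fixes f :: "nat \<Rightarrow> 'a::metric_space \<Rightarrow> 'a"
  assumes B: "compact B" "B \<noteq> {}" "set_map n f B = B"
    and K: "compact K" "K \<noteq> {}" "set_map n f K = K" and n: "1 \<le> n"
    and cont: "\<And>r. r < n \<Longrightarrow> continuous_on UNIV (f r)"
    and fL: "\<And>r x y. r < n \<Longrightarrow> dist (f r x) (f r y) \<le> L * dist x y"
    and L: "0 \<le> L" "L < 1"
  shows "B = K"
proof -
  have "hausdorff_metric B K \<le> L * hausdorff_metric B K"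
    using sm_lip[of B K n f L] B K n cont fL L(1) by simp
  moreover have "0 \<le> hausdorff_metric B K" using hm_nonneg B K by blast
  ultimately have h1: "(1 - L) * hausdorff_metric B K \<le> 0" by (simp add: algebra_simps)
  have "0 < 1 - L" using L by simp
  then have "hausdorff_metric B K \<le> 0" using h1 by (auto simp: mult_le_0_iff)
  then show ?thesis using hm_zero B K by blast
qed

inductive_set orbit :: "nat \<Rightarrow> (nat \<Rightarrow> 'a \<Rightarrow> 'a) \<Rightarrow> 'a \<Rightarrow> 'a set" for n f p where
  orb_base: "p \<in> orbit n f p"
| orb_step: "x \<in> orbit n f p \<Longrightarrow> r < n \<Longrightarrow> f r x \<in> orbit n f p"

lemma attractor_exists:
  fixes f :: "nat \<Rightarrow> 'a::complete_space \<Rightarrow> 'a"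
  assumes n: "1 \<le> n" and L: "0 \<le> L" "L < 1"
    and fL: "\<And>r x y. r < n \<Longrightarrow> dist (f r x) (f r y) \<le> L * dist x y"
  shows "\<exists>K. compact K \<and> K \<noteq> {} \<and> set_map n f K = K"
proof -
  have cont: "continuous_on UNIV (f r)" if "r < n" for r
  proof -
    have "L-lipschitz_on UNIV (f r)" by (rule lipschitz_onI) (use fL[OF that] L in auto)
    then show ?thesis by (rule lipschitz_on_continuous_on)
  qed
  define p :: 'a where "p = undefined"
  define M where "M = Max ((\<lambda>r. dist (f r p) p) ` {..<n})"
  define R where "R = M / (1 - L)"
  have Mge: "dist (f r p) p \<le> M" if "r < n" for r unfolding M_def using that by (simp add: Max_ge)
  have M0: "0 \<le> M" 
  proof -
    have "dist (f 0 p) p \<le> M" using Mge n by simp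
    then show ?thesis using zero_le_dist[of "f 0 p" p] by linarith
  qed
  have R0: "0 \<le> R" unfolding R_def using M0 L by simp
  have L1: "1 - L \<noteq> 0" using L by simp
  have RM: "L * R + M = R" unfolding R_def using L1 by (simp add: field_simps)
  have orbR: "dist x p \<le> R" if "x \<in> orbit n f p" for x
    using that
  proof (induction rule: orbit.induct)
    case orb_base then show ?case using R0 by simp
  next
    case (orb_step x r)
    have r: "r < n" and ih: "dist x p \<le> R" using orb_step by auto
    have "dist (f r x) p \<le> dist (f r x) (f r p) + dist (f r p) p" by (rule dist_triangle)
    also have "\<dots> \<le> L * dist x p + M" using fL[OF r, of x p] Mge[OF r] by linarith
    also have "\<dots> \<le> L * R + M" using ih L by (simp add: mult_left_mono)
    finally show ?case using RM by simp
  qed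
  have cover: "\<exists>S. finite S \<and> orbit n f p \<subseteq> (\<Union>s\<in>S. cball s (L ^ m * R))" for m
  proof (induction m)
    case 0
    have "orbit n f p \<subseteq> cball p R"
    proof
      fix x assume "x \<in> orbit n f p"
      then have "dist x p \<le> R" by (rule orbR)
      then show "x \<in> cball p R" by (simp add: dist_commute)
    qed
    then show ?case by (intro exI[of _ "{p}"]) simp
  next
    case (Suc m)
    then obtain S where S: "finite S" "orbit n f p \<subseteq> (\<Union>s\<in>S. cball s (L ^ m * R))" by blast
    let ?S = "insert p (\<Union>r<n. f r ` S)"
    have "orbit n f p \<subseteq> (\<Union>s\<in>?S. cball s (L ^ Suc m * R))"
    proof
      fix x assume "x \<in> orbit n f p"
      then show "x \<in> (\<Union>s\<in>?S. cball s (L ^ Suc m * R))"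
      proof cases
        case orb_base
        then show ?thesis using L R0 by auto
      next
        case (orb_step y r)
        have xy: "x = f r y" and y: "y \<in> orbit n f p" and r: "r < n" using orb_step by auto
        obtain s where s: "s \<in> S" "dist s y \<le> L ^ m * R" using S(2) y by auto
        have "dist (f r s) (f r y) \<le> L * dist s y" using fL[OF r] .
        also have "\<dots> \<le> L * (L ^ m * R)" using s L by (simp add: mult_left_mono)
        finally have "dist (f r s) x \<le> L ^ Suc m * R" using xy by simp
        moreover have "f r s \<in> ?S" using s r by blast
        ultimately show ?thesis by (intro UN_I[of "f r s"]) auto
      qed
    qed
    moreover have "finite ?S" using S(1) by simp
    ultimately show ?case by blast
  qed
  define D where "D = closure (orbit n f p)"
  have "p \<in> D" unfolding D_def using orbit.orb_base[of p n f] closure_subset[of "orbit n f p"] by blast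
  then have Dne: "D \<noteq> {}" by blast
  have Dc: "compact D"
    unfolding compact_eq_totally_bounded
  proof (intro conjI allI impI)
    show "complete D" unfolding D_def by (simp add: complete_eq_closed)
  next
    fix e :: real assume e: "0 < e"
    have "(\<lambda>m. L ^ m * R) \<longlonglongrightarrow> 0"
      by (intro tendsto_mult_left_zero LIMSEQ_power_zero) (use L in simp)
    then have "\<forall>\<^sub>F m in sequentially. L ^ m * R < e" using e by (rule order_tendstoD(2))
    then obtain m where m: "L ^ m * R < e" unfolding eventually_sequentially by blast
    obtain S where S: "finite S" "orbit n f p \<subseteq> (\<Union>s\<in>S. cball s (L ^ m * R))" using cover by blast
    have "closed (\<Union>s\<in>S. cball s (L ^ m * R))" using S(1) by (intro closed_UN) auto
    then have "D \<subseteq> (\<Union>s\<in>S. cball s (L ^ m * R))" unfolding D_def using closure_minimal[OF S(2)] by blast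
    also have "\<dots> \<subseteq> (\<Union>s\<in>S. ball s e)"
    proof (rule UN_mono[OF order_refl])
      fix s show "cball s (L ^ m * R) \<subseteq> ball s e"
      proof
        fix y assume "y \<in> cball s (L ^ m * R)"
        then have "dist s y \<le> L ^ m * R" by simp
        then show "y \<in> ball s e" using m by simp
      qed
    qed
    finally show "\<exists>k. finite k \<and> D \<subseteq> (\<Union>x\<in>k. ball x e)" using S(1) by blast
  qed
  have Dinv: "set_map n f D \<subseteq> D"
    unfolding set_map_def
  proof (intro UN_least)
    fix r assume "r \<in> {..<n}"
    then have r: "r < n" by simp
    have c: "continuous_on (closure (orbit n f p)) (f r)" by (rule continuous_on_subset[OF cont[OF r]]) simp
    have "f r ` orbit n f p \<subseteq> orbit n f p"
    proof
      fix y assume "y \<in> f r ` orbit n f p"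
      then obtain x where "x \<in> orbit n f p" "y = f r x" by blast
      then show "y \<in> orbit n f p" using orbit.orb_step[OF _ r] by simp
    qed
    then have "f r ` orbit n f p \<subseteq> closure (orbit n f p)"
      using closure_subset[of "orbit n f p"] by (rule order_trans)
    then show "f r ` D \<subseteq> D" unfolding D_def
      by (rule image_closure_subset[OF c closed_closure])
  qed
  show ?thesis by (rule attractor_from_invariant[OF Dc Dne Dinv n cont])
qed

theorem mainTheorem6:
  fixes n :: nat
    and fs :: "nat \<Rightarrow> nat \<Rightarrow> 'a::complete_space \<Rightarrow> 'a"
    and f :: "nat \<Rightarrow> 'a \<Rightarrow> 'a"
    and C :: "'a set"
  assumes n_pos: "n \<ge> 1"
    and fs_lip: "\<And>r i. r < n \<Longrightarrow> i \<ge> 1 \<Longrightarrow> \<exists>L. L-lipschitz_on UNIV (fs r i)"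
    and prod_lim: "(\<lambda>k. \<Prod>i\<in>{1..k}. Max ((\<lambda>r. Lip (fs r i)) ` {..<n})) \<longlonglongrightarrow> 0"
    and C_compact: "compact C"
    and C_inv: "\<And>r i. r < n \<Longrightarrow> i \<ge> 1 \<Longrightarrow> fs r i ` C \<subseteq> C"
    and unif: "\<And>r. r < n \<Longrightarrow> uniform_limit C (\<lambda>i. fs r i) (f r) sequentially"
    and f_lip: "\<And>r. r < n \<Longrightarrow> \<exists>L. L-lipschitz_on UNIV (f r)"
    and contr: "Max ((\<lambda>r. Lip (f r)) ` {..<n}) < 1"
  shows "\<exists>AF. (compact AF \<and> AF \<noteq> {} \<and> set_map n f AF = AF)
           \<and> (\<forall>B. compact B \<and> B \<noteq> {} \<and> set_map n f B = B \<longrightarrow> B = AF)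
           \<and> (\<forall>A. compact A \<and> A \<noteq> {} \<and> A \<subseteq> C \<longrightarrow>
                 (\<lambda>k. hausdorff_metric (forward_traj n fs k A) AF) \<longlonglongrightarrow> 0)"
proof -
  define L where "L = Max ((\<lambda>r. Lip (f r)) ` {..<n})"
  have flip: "(Lip (f r))-lipschitz_on UNIV (f r)" if "r < n" for r
    by (rule Lip_works[OF f_lip[OF that]])
  have Lr: "Lip (f r) \<le> L" if "r < n" for r unfolding L_def using that by (simp add: Max_ge)
  have "0 < n" using n_pos by simp
  then have L0: "0 \<le> L" using Lr[of 0] lipschitz_on_nonneg[OF flip[of 0]] by linarith
  have L1: "L < 1" using contr L_def by simp
  have fL: "dist (f r x) (f r y) \<le> L * dist x y" if "r < n" for r x y
  proof -
    have "dist (f r x) (f r y) \<le> Lip (f r) * dist x y" using lipschitz_onD[OF flip[OF that]] by simp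
    also have "\<dots> \<le> L * dist x y" using Lr[OF that] by (simp add: mult_right_mono)
    finally show ?thesis .
  qed
  have fcont: "continuous_on UNIV (f r)" if "r < n" for r
    using lipschitz_on_continuous_on[OF flip[OF that]] .
  have fscont: "continuous_on UNIV (fs r i)" if ri: "r < n" "1 \<le> i" for r i
  proof -
    obtain L' where "L'-lipschitz_on UNIV (fs r i)" using fs_lip[OF ri] by blast
    then show ?thesis by (rule lipschitz_on_continuous_on)
  qed
  obtain K where K: "compact K" "K \<noteq> {}" "set_map n f K = K"
    using attractor_exists[of n L f, OF n_pos L0 L1 fL] by metis
  have uniq: "\<forall>B. compact B \<and> B \<noteq> {} \<and> set_map n f B = B \<longrightarrow> B = K"
  proof (intro allI impI)
    fix B assume B: "compact B \<and> B \<noteq> {} \<and> set_map n f B = B"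
    show "B = K"
      by (rule attractor_unique[of B n f K L]) (use B K n_pos fcont fL L0 L1 in auto)
  qed
  have conv: "(\<lambda>k. hausdorff_metric (forward_traj n fs k A) K) \<longlonglongrightarrow> 0"
    if A: "compact A" "A \<noteq> {}" "A \<subseteq> C" for A
  proof -
    let ?T = "\<lambda>k. forward_traj n fs k A"
    have Tk: "compact (?T k) \<and> ?T k \<noteq> {} \<and> ?T k \<subseteq> C" for k
    proof (induction k)
      case 0 then show ?case using A by simp
    next
      case (Suc k)
      have "compact (set_map n (\<lambda>r. fs r (Suc k)) (?T k))"
        using sm_compact[of "?T k" n "\<lambda>r. fs r (Suc k)"] Suc fscont by simp
      moreover have "set_map n (\<lambda>r. fs r (Suc k)) (?T k) \<noteq> {}"
        using sm_ne[of "?T k" n "\<lambda>r. fs r (Suc k)"] Suc n_pos by simp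
      moreover have "set_map n (\<lambda>r. fs r (Suc k)) (?T k) \<subseteq> C"
        unfolding set_map_def
      proof (rule UN_least)
        fix r assume "r \<in> {..<n}"
        then have "fs r (Suc k) ` C \<subseteq> C" using C_inv by simp
        moreover have "?T k \<subseteq> C" using Suc by simp
        ultimately show "fs r (Suc k) ` ?T k \<subseteq> C" by blast
      qed
      ultimately show ?case by simp
    qed
    show ?thesis
    proof (rule rec_to_zero[OF _ L0 L1])
      fix k show "0 \<le> hausdorff_metric (?T k) K" using hm_nonneg[of "?T k" K] Tk[of k] K by simp
    next
      fix \<delta> :: real assume d: "0 < \<delta>"
      have "\<forall>r\<in>{..<n}. \<forall>\<^sub>F i in sequentially. \<forall>x\<in>C. dist (fs r i x) (f r x) < \<delta>"
      proof
        fix r assume "r \<in> {..<n}"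
        then show "\<forall>\<^sub>F i in sequentially. \<forall>x\<in>C. dist (fs r i x) (f r x) < \<delta>"
          using uniform_limitD[OF unif[of r] d] by simp
      qed
      then have "\<forall>\<^sub>F i in sequentially. \<forall>r\<in>{..<n}. \<forall>x\<in>C. dist (fs r i x) (f r x) < \<delta>"
        by (rule eventually_ball_finite[OF finite_lessThan])
      then obtain N where N: "\<And>i. N \<le> i \<Longrightarrow> \<forall>r\<in>{..<n}. \<forall>x\<in>C. dist (fs r i x) (f r x) < \<delta>"
        unfolding eventually_sequentially by metis
      show "\<exists>N. \<forall>k\<ge>N. hausdorff_metric (?T (Suc k)) K \<le> \<delta> + L * hausdorff_metric (?T k) K"
      proof (intro exI allI impI)
        fix k assume k: "N \<le> k"
        let ?G = "set_map n (\<lambda>r. fs r (Suc k)) (?T k)"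
        let ?FA = "set_map n f (?T k)"
        have c: "compact (?T k)" "?T k \<noteq> {}" "?T k \<subseteq> C" using Tk by auto
        have cG: "compact ?G" "?G \<noteq> {}"
          using sm_compact[of "?T k" n "\<lambda>r. fs r (Suc k)"] sm_ne[of "?T k" n "\<lambda>r. fs r (Suc k)"] c fscont n_pos by auto
        have cF: "compact ?FA" "?FA \<noteq> {}"
          using sm_compact[of "?T k" n f] sm_ne[of "?T k" n f] c fcont n_pos by auto
        have "hausdorff_metric ?G K \<le> hausdorff_metric ?G ?FA + hausdorff_metric ?FA K"
          using hm_triangle[OF cG(1) cF(1) cG(2) cF(2) K(1,2)] .
        also have "hausdorff_metric ?G ?FA \<le> \<delta>"
        proof (rule sm_pert[OF c(1,2) n_pos c(3)])
          fix r assume "r < n" then show "continuous_on UNIV (fs r (Suc k))" using fscont by simp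
        next
          fix r assume "r < n" then show "continuous_on UNIV (f r)" using fcont by simp
        next
          fix r x assume rx: "r < n" "x \<in> C"
          have "N \<le> Suc k" using k by simp
          then have "\<forall>r\<in>{..<n}. \<forall>x\<in>C. dist (fs r (Suc k) x) (f r x) < \<delta>" by (rule N)
          then have "dist (fs r (Suc k) x) (f r x) < \<delta>" using rx by simp
          then show "dist (fs r (Suc k) x) (f r x) \<le> \<delta>" by simp
        qed
        also have "hausdorff_metric ?FA K \<le> L * hausdorff_metric (?T k) K"
          using sm_lip[of "?T k" K n f L] c K n_pos fcont fL L0 by simp
        finally show "hausdorff_metric (?T (Suc k)) K \<le> \<delta> + L * hausdorff_metric (?T k) K"
          by simp
      qed
    qed
  qed
  have conv': "\<forall>A. compact A \<and> A \<noteq> {} \<and> A \<subseteq> C \<longrightarrow>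
                 (\<lambda>k. hausdorff_metric (forward_traj n fs k A) K) \<longlonglongrightarrow> 0"
    using conv by blast
  have K': "compact K \<and> K \<noteq> {} \<and> set_map n f K = K" using K by blast
  show ?thesis by (rule exI[of _ K], intro conjI K' uniq conv')
qed

end
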